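(* Let $P\in\mathbb N_+$, $M\ge2$, $d=\lceil 2P\ln M\rceil$, and let $\mathcal Y$ be a finite set. Let $\mu^{(1)}_1,\dots,\mu^{(1)}_M,\mu^{(2)}_1,\dots,\mu^{(2)}_M:\mathcal Y\to\{0,1/P,2/P,\dots,1\}$. For a finite sequence $\mathbf y=(y_1,\dots,y_n)\in\mathcal Y^n$ define the row vector $\overline{\mathbf M}_{\mathbf y}\in\mathbb R^{2M}$ by $\overline{\mathbf M}_{\mathbf y}=\big(\prod_{q=1}^n\mu^{(1)}_1(y_q),\dots,\prod_{q=1}^n\mu^{(1)}_M(y_q),\prod_{q=1}^n\mu^{(2)}_1(y_q),\dots,\prod_{q=1}^n\mu^{(2)}_M(y_q)\big)$, with $\overline{\mathbf M}_{\emptyset}=(1,\dots,1)$. Then for every $\mathbf y$ of length $n>d$, the vector $\overline{\mathbf M}_{\mathbf y}$ lies in the linear span of $\{\overline{\mathbf M}_{\mathbf y_J}: J\subseteq[n],\ |J|\le d\}$, where $\mathbf y_J=(y_j)_{j\in J}$ (with $\mathbf y_\emptyset=\emptyset$).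
   Context: $\ln$ denotes the natural logarithm. In the paper's application $\mathcal Y=\mathcal S\times\mathcal A\times\mathcal Z$ and $\mu^{(b)}_m(y)$ is the probability of reward $z$ at state–action $(s,a)$ in context $m$ of model $b$. *)

theory Defs
  imports "HOL-Analysis.Analysis"
begin

text \<open>Row vector of R^{2M}, indexed by pairs (b,m) with b in {1,2}, m in {1..M};
  coordinates outside this index range are set to 0.
  mu b m y is the value of mu^{(b)}_m at y; ys is the finite sequence (a list).\<close>
definition Mbar :: "nat \<Rightarrow> (nat \<Rightarrow> nat \<Rightarrow> 'y \<Rightarrow> real) \<Rightarrow> 'y list \<Rightarrow> (nat \<times> nat \<Rightarrow> real)" where
  "Mbar M mu ys = (\<lambda>(b, m). if b \<in> {1, 2} \<and> m \<in> {1..M}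
                             then (\<Prod>q<length ys. mu b m (ys ! q)) else 0)"

definition in_lin_span :: "('i \<Rightarrow> real) \<Rightarrow> ('i \<Rightarrow> real) set \<Rightarrow> bool" where
  "in_lin_span v S \<longleftrightarrow> (\<exists>c. v = (\<lambda>k. \<Sum>u\<in>S. c u * u k))"

end

theory Submission
  imports Defs
begin

lemma ln_lower: assumes "(0::real) \<le> x" shows "2*x/(2+x) \<le> ln (1+x)"
proof -
  let ?f = "\<lambda>t::real. ln (1+t) - 2*t/(2+t)"
  have "?f 0 \<le> ?f x"
  proof (rule DERIV_nonneg_imp_nondecreasing[OF assms])
    fix t :: real assume t: "0 \<le> t" "t \<le> x"
    have "DERIV ?f t :> (1/(1+t) - (2*(2+t) - 2*t*1)/((2+t)*(2+t)))"
      using t by (auto intro!: derivative_eq_intros)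
    moreover have "1/(1+t) - (2*(2+t) - 2*t*1)/((2+t)*(2+t)) = t^2/((1+t)*(2+t)*(2+t))"
    proof -
      have a: "1+t > 0" "2+t > 0" using t by auto
      have "1/(1+t) - (2*(2+t) - 2*t*1)/((2+t)*(2+t)) = ((2+t)*(2+t) - (1+t)*(2*(2+t) - 2*t*1))/((1+t)*(2+t)*(2+t))"
        using a by (simp add: diff_frac_eq mult.assoc)
      also have "(2+t)*(2+t) - (1+t)*(2*(2+t) - 2*t*1) = t^2" by (simp add: algebra_simps power2_eq_square)
      finally show ?thesis .
    qed
    moreover have "t^2/((1+t)*(2+t)*(2+t)) \<ge> 0" using t by simp
    ultimately show "\<exists>y. DERIV ?f t :> y \<and> y \<ge> 0" by metis
  qed
  thus ?thesis by simp
qed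

lemma numeric:
  fixes P M n :: nat
  assumes "P \<ge> 1" "M \<ge> 2" "int n > \<lceil>2 * real P * ln (real M)\<rceil>"
  shows "real (2*M) * (real P/(real P+1))^n < 1"
proof -
  have Pp: "real P > 0" using assms(1) by simp
  have n1: "real n \<ge> 2 * real P * ln (real M) + 1"
  proof -
    have "int n \<ge> \<lceil>2 * real P * ln (real M)\<rceil> + 1" using assms(3) by linarith
    hence "real_of_int (int n) \<ge> real_of_int \<lceil>2 * real P * ln (real M)\<rceil> + 1"
      by (metis of_int_1 of_int_add of_int_le_iff)
    moreover have "real_of_int \<lceil>2 * real P * ln (real M)\<rceil> \<ge> 2 * real P * ln (real M)" by (rule le_of_int_ceiling)
    ultimately show ?thesis by linarith
  qed
  have L: "ln (1 + 1/real P) \<ge> 2/(2*real P+1)"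
  proof -
    have "2*(1/real P)/(2+1/real P) \<le> ln (1 + 1/real P)" by (rule ln_lower) (use Pp in simp)
    moreover have "2*(1/real P)/(2+1/real P) = 2/(2*real P+1)" using Pp by (simp add: field_simps)
    ultimately show ?thesis by simp
  qed
  have lM: "ln (real M) \<ge> ln 2" using assms(2) by simp
  have l2: "ln (2::real) < 1" by (rule ln_2_less_1)
  have lMpos: "ln (real M) > 0" using assms(2) by simp
  have key: "real n * (2/(2*real P+1)) > ln 2 + ln (real M)"
  proof -
    have "real n * (2/(2*real P+1)) \<ge> (2 * real P * ln (real M) + 1) * (2/(2*real P+1))"
      using n1 Pp by (intro mult_right_mono) auto
    moreover have "(2 * real P * ln (real M) + 1) * (2/(2*real P+1)) - (ln 2 + ln (real M))
        = ((2*real P - 1)*(ln (real M) - ln 2) + (2 - 2*ln 2))/(2*real P+1)"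
      using Pp by (simp add: field_simps)
    moreover have "((2*real P - 1)*(ln (real M) - ln 2) + (2 - 2*ln 2))/(2*real P+1) > 0"
      using Pp lM l2 assms(1) by (intro divide_pos_pos add_nonneg_pos mult_nonneg_nonneg) auto
    ultimately show ?thesis by linarith
  qed
  have "ln (real (2*M)) = ln 2 + ln (real M)" using assms(2) by (simp add: ln_mult)
  also have "\<dots> < real n * ln (1 + 1/real P)"
    using key L by (smt (verit) mult_left_mono of_nat_0_le_iff)
  also have "\<dots> = ln ((1 + 1/real P)^n)" using Pp by (simp add: ln_realpow)
  finally have "real (2*M) < (1 + 1/real P)^n"
    using Pp assms(2) by (metis ln_less_cancel_iff of_nat_0_less_iff zero_less_power pos_add_strict zero_less_divide_1_iff zero_less_one mult_pos_pos zero_less_numeral order_less_le_trans le_numeral_extra(4) not_numeral_le_zero)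
  moreover have eqi: "(1 + 1/real P) = inverse (real P/(real P+1))" using Pp by (simp add: field_simps)
  ultimately have "real (2*M) < inverse ((real P/(real P+1))^n)" by (metis power_inverse)
  moreover have "(real P/(real P+1))^n > 0" using Pp by simp
  ultimately show ?thesis by (simp add: field_simps)
qed

lemma cover:
  fixes x :: "'i \<Rightarrow> nat \<Rightarrow> real" and P :: nat
  assumes "finite K" "finite V" "card V \<le> P+1"
  shows "finite C \<Longrightarrow> \<forall>i\<in>C. \<forall>q\<in>K. x i q \<in> V \<Longrightarrow>
     real (card C) * (real P/(real P+1))^card K < 1 \<Longrightarrow> \<exists>c. \<forall>i\<in>C. \<exists>q\<in>K. x i q = c q"
  using assms(1)
proof (induction K arbitrary: C rule: finite_induct)
  case empty
  then show ?case by simp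
next
  case (insert q K C)
  show ?case
  proof (cases "C = {}")
    case True then show ?thesis by simp
  next
    case False
    define A where "A v = {i\<in>C. x i q = v}" for v
    have Vne: "V \<noteq> {}" using False insert.prems(2) by auto
    obtain v0 where v0: "v0 \<in> V" "\<And>v. v \<in> V \<Longrightarrow> card (A v) \<le> card (A v0)"
      proof -
      obtain v0 where "v0 \<in> V" "(card \<circ> A) v0 = Max ((card \<circ> A) ` V)"
        using Max_in[of "(card \<circ> A) ` V"] Vne assms(2) by (metis finite_imageI imageE image_is_empty)
      moreover have "\<And>v. v \<in> V \<Longrightarrow> card (A v) \<le> Max ((card \<circ> A) ` V)"
        using assms(2) by (metis Max_ge comp_apply finite_imageI image_eqI)
      ultimately show ?thesis using that by auto
    qed
    have "C \<subseteq> (\<Union>v\<in>V. A v)" using insert.prems(2) by (auto simp: A_def)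
    hence "card C \<le> card (\<Union>v\<in>V. A v)"
      using assms(2) insert.prems(1) by (intro card_mono) (auto simp: A_def)
    also have "\<dots> \<le> (\<Sum>v\<in>V. card (A v))" by (rule card_UN_le[OF assms(2)])
    also have "\<dots> \<le> (\<Sum>v\<in>V. card (A v0))" by (rule sum_mono) (use v0 in auto)
    also have "\<dots> = card V * card (A v0)" by simp
    also have "\<dots> \<le> (P+1) * card (A v0)" using assms(3) by (intro mult_right_mono) auto
    finally have cC: "card C \<le> (P+1) * card (A v0)" .
    define C' where "C' = C - A v0"
    have fA: "finite (A v0)" "A v0 \<subseteq> C" using insert.prems(1) by (auto simp: A_def)
    have cC': "card C' = card C - card (A v0)" unfolding C'_def using fA by (simp add: card_Diff_subset)
    have "real (card C') * (real P + 1) \<le> real (card C) * real P"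
    proof -
      have "card (A v0) \<le> card C" using fA insert.prems(1) by (simp add: card_mono)
      hence "real (card C') = real (card C) - real (card (A v0))" using cC' by simp
      moreover have "real (card C) \<le> (real P+1) * real (card (A v0))" using cC
        by (metis of_nat_1 of_nat_add of_nat_le_iff of_nat_mult)
      moreover have "(real (card C) - real (card (A v0))) * (real P + 1) = real (card C) * real P + (real (card C) - (real P+1) * real (card (A v0)))"
        by (simp add: algebra_simps)
      ultimately show ?thesis
        by (smt (verit))
    qed
    hence le: "real (card C') \<le> real (card C) * (real P/(real P+1))"
    proof -
      have "real (card C') \<le> real (card C) * real P / (real P + 1)"
        using \<open>real (card C') * (real P + 1) \<le> real (card C) * real P\<close>
        by (subst pos_le_divide_eq) (simp_all add: add_nonneg_pos)
      thus ?thesis by simp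
    qed
    have "real (card C') * (real P/(real P+1))^card K \<le> real (card C) * (real P/(real P+1)) * (real P/(real P+1))^card K"
      by (rule mult_right_mono[OF le], rule zero_le_power, simp)
    also have "\<dots> = real (card C) * (real P/(real P+1))^card (insert q K)"
      using insert.hyps by (simp add: mult.assoc)
    finally have "real (card C') * (real P/(real P+1))^card K \<le> real (card C) * (real P/(real P+1))^card (insert q K)" .
    hence h3: "real (card C') * (real P/(real P+1))^card K < 1" using insert.prems(3) by linarith
    have h1: "finite C'" using insert.prems(1) by (simp add: C'_def)
    have h2: "\<forall>i\<in>C'. \<forall>q\<in>K. x i q \<in> V" using insert.prems(2) by (auto simp: C'_def)
    obtain c where c: "\<forall>i\<in>C'. \<exists>q\<in>K. x i q = c q" using insert.IH[OF h1 h2 h3] by blast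
    show ?thesis
    proof (intro exI ballI)
      fix i assume i: "i \<in> C"
      show "\<exists>q'\<in>insert q K. x i q' = (c(q := v0)) q'"
      proof (cases "i \<in> A v0")
        case True then show ?thesis by (auto simp: A_def)
      next
        case False
        then obtain q' where "q' \<in> K" "x i q' = c q'" using c i by (auto simp: C'_def)
        then show ?thesis using insert.hyps(2) by (intro bexI[of _ q']) auto
      qed
    qed
  qed
qed

lemma prod_nth_list: "(\<Prod>q<length ys. f (ys!q)) = prod_list (map f ys)"
  by (induction ys) (simp_all add: prod.lessThan_Suc_shift del: prod.lessThan_Suc)

lemma prod_nths_aux: "prod_list (map f (nths xs J)) = (\<Prod>q<length xs. if q \<in> J then f (xs!q) else 1)"
proof (induction xs arbitrary: J)
  case Nil then show ?case by simp
next
  case (Cons x xs)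
  have "(\<Prod>q<length (x#xs). if q\<in>J then f((x#xs)!q) else 1) = (if 0\<in>J then f x else 1) * (\<Prod>q<length xs. if Suc q \<in> J then f (xs!q) else 1)"
    by (simp only: length_Cons prod.lessThan_Suc_shift nth_Cons_0 nth_Cons_Suc)
  moreover have "prod_list (map f (nths (x#xs) J)) = (if 0\<in>J then f x else 1) * prod_list (map f (nths xs {j. Suc j \<in> J}))"
    by (simp add: nths_Cons)
  ultimately show ?case using Cons.IH[of "{j. Suc j \<in> J}"] by simp
qed

lemma prod_nths:
  assumes "J \<subseteq> {0..<length xs}"
  shows "(\<Prod>q<length (nths xs J). f (nths xs J ! q)) = (\<Prod>q\<in>J. f (xs!q))"
proof -
  have "(\<Prod>q<length (nths xs J). f (nths xs J ! q)) = (\<Prod>q<length xs. if q \<in> J then f (xs!q) else 1)"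
    by (simp add: prod_nth_list prod_nths_aux)
  also have "\<dots> = (\<Prod>q\<in>{..<length xs} \<inter> J. f (xs!q))"
    by (simp add: prod.inter_restrict)
  also have "{..<length xs} \<inter> J = J" using assms by auto
  finally show ?thesis .
qed

lemma expand:
  fixes xx c :: "nat \<Rightarrow> real"
  assumes K: "finite K" and h: "\<exists>q\<in>K. xx q = c q"
  shows "(\<Prod>q\<in>K. xx q) = (\<Sum>X\<in>Pow K - {K}. (-((-1)^card K * (-1)^card X * (\<Prod>q\<in>K-X. c q))) * (\<Prod>q\<in>X. xx q))"
proof -
  let ?g = "\<lambda>X. (-1::real) ^ card X * (\<Prod>q\<in>X. xx q) * (\<Prod>q\<in>K-X. c q)"
  have "0 = (\<Prod>q\<in>K. c q - xx q)" using h K by (metis (no_types, lifting) diff_self prod_zero_iff)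
  also have "\<dots> = (\<Sum>X\<in>Pow K. ?g X)" by (rule prod_diff_conv_sum[OF K])
  also have "\<dots> = ?g K + (\<Sum>X\<in>Pow K - {K}. ?g X)" using K by (intro sum.remove) auto
  finally have e: "?g K = - (\<Sum>X\<in>Pow K - {K}. ?g X)" by linarith
  have s: "((-1::real)^card K) * (-1)^card K = 1"
    by (metis power_mult_distrib mult_minus_left mult_1 power_one minus_minus)
  have "(\<Prod>q\<in>K. xx q) = ((-1)^card K) * ?g K" using s by (simp add: mult.assoc[symmetric])
  also have "\<dots> = ((-1)^card K) * - (\<Sum>X\<in>Pow K - {K}. ?g X)" using e by simp
  also have "\<dots> = (\<Sum>X\<in>Pow K - {K}. (-((-1)^card K * (-1)^card X * (\<Prod>q\<in>K-X. c q))) * (\<Prod>q\<in>X. xx q))"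
    by (simp add: sum_distrib_left mult_ac sum_negf)
  finally show ?thesis .
qed

theorem lemma8:
  fixes P M :: nat and Y :: "'y set" and mu :: "nat \<Rightarrow> nat \<Rightarrow> 'y \<Rightarrow> real"
    and ys :: "'y list"
  assumes "P \<ge> 1" and "M \<ge> 2" and "finite Y"
    and "\<And>b m y. b \<in> {1, 2} \<Longrightarrow> m \<in> {1..M} \<Longrightarrow> y \<in> Y \<Longrightarrow>
           \<exists>k::nat. k \<le> P \<and> mu b m y = real k / real P"
    and "set ys \<subseteq> Y"
    and "int (length ys) > \<lceil>2 * real P * ln (real M)\<rceil>"
  shows "in_lin_span (Mbar M mu ys)
           ((\<lambda>J. Mbar M mu (nths ys J)) `
              {J. J \<subseteq> {0..<length ys} \<and> int (card J) \<le> \<lceil>2 * real P * ln (real M)\<rceil>})"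
proof -
  define n where "n = length ys"
  define d where "d = \<lceil>2 * real P * ln (real M)\<rceil>"
  define w where "w K = (\<lambda>(b, m). if b \<in> {1, 2} \<and> m \<in> {1..M}
                             then (\<Prod>q\<in>K. mu b m (ys ! q)) else (0::real))" for K :: "nat set"
  define Idx where "Idx = {J. J \<subseteq> {0..<n} \<and> int (card J) \<le> d}"
  define S0 where "S0 = w ` Idx"
  have finIdx: "finite Idx" unfolding Idx_def by (rule finite_subset[of _ "Pow {0..<n}"]) auto
  have finS0: "finite S0" unfolding S0_def using finIdx by simp
  have nthsw: "Mbar M mu (nths ys J) = w J" if "J \<subseteq> {0..<n}" for J
  proof -
    have "J \<subseteq> {0..<length ys}" using that n_def by simp
    note pn = prod_nths[OF this]
    show ?thesis unfolding Mbar_def w_def by (rule ext) (auto simp: pn)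
  qed
  have T: "(\<lambda>J. Mbar M mu (nths ys J)) ` Idx = S0"
    unfolding S0_def Idx_def by (rule image_cong) (auto simp: nthsw)
  have full: "Mbar M mu ys = w {0..<n}"
    unfolding Mbar_def w_def n_def atLeast0LessThan by simp
  define C where "C = ({1,2} \<times> {1..M} :: (nat \<times> nat) set)"
  define V where "V = (\<lambda>k. real k / real P) ` {..P}"
  have cardC: "card C = 2 * M" unfolding C_def by (simp add: card_cartesian_product)
  have finV: "finite V" "card V \<le> P + 1" unfolding V_def
    using card_image_le[of "{..P}" "\<lambda>k. real k / real P"] by auto
  have inV: "\<forall>i\<in>C. \<forall>q\<in>K. (\<lambda>(b,m) q. mu b m (ys!q)) i q \<in> V" if "K \<subseteq> {0..<n}" for K
  proof (intro ballI)
    fix i q assume i: "i \<in> C" and q: "q \<in> K"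
    obtain b m where bm: "i = (b,m)" by fastforce
    have "ys ! q \<in> Y" using q that assms(5) n_def by (metis atLeastLessThan_iff nth_mem subsetD)
    then obtain k where "k \<le> P" "mu b m (ys!q) = real k / real P"
      using assms(4)[of b m] i bm unfolding C_def by auto
    thus "(\<lambda>(b,m) q. mu b m (ys!q)) i q \<in> V" using bm unfolding V_def by auto
  qed
  have rep: "K \<subseteq> {0..<n} \<Longrightarrow> \<exists>c. w K = (\<lambda>k. \<Sum>u\<in>S0. c u * u k)" for K
  proof (induction "card K" arbitrary: K rule: less_induct)
    case less
    have finK: "finite K" using less.prems finite_subset by blast
    show ?case
    proof (cases "int (card K) \<le> d")
      case True
      hence KI: "w K \<in> S0" unfolding S0_def Idx_def using less.prems by auto
      show ?thesis
      proof (intro exI ext)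
        fix k
        show "w K k = (\<Sum>u\<in>S0. (if u = w K then 1 else 0) * u k)"
          using finS0 KI by (simp add: if_distrib[of "\<lambda>a. a * _"] cong: if_cong)
      qed
    next
      case False
      hence gt: "int (card K) > d" by simp
      have num: "real (card C) * (real P/(real P+1))^card K < 1"
        using numeric[OF assms(1,2), of "card K"] gt cardC d_def by simp
      obtain c where c: "\<forall>i\<in>C. \<exists>q\<in>K. (\<lambda>(b,m) q. mu b m (ys!q)) i q = c q"
      proof -
        have finC: "finite C" unfolding C_def by simp
        show ?thesis using cover[OF finK finV(1) finV(2) finC inV[OF less.prems] num] that by blast
      qed
      define a where "a X = -((-1)^card K * (-1)^card X * (\<Prod>q\<in>K-X. c q))" for X :: "nat set"
      have wK: "w K k = (\<Sum>X\<in>Pow K - {K}. a X * w X k)" for k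
      proof -
        obtain b m where k: "k = (b,m)" by fastforce
        show ?thesis
        proof (cases "b \<in> {1,2} \<and> m \<in> {1..M}")
          case True
          hence "\<exists>q\<in>K. mu b m (ys!q) = c q" using c unfolding C_def by fastforce
          from expand[OF finK this] show ?thesis using True unfolding k w_def a_def by simp
        next
          case False
          then show ?thesis by (simp only: k w_def prod.case if_not_P[OF False] if_False mult_zero_right sum.neutral_const)
        qed
      qed
      have "\<forall>X\<in>Pow K - {K}. \<exists>c. w X = (\<lambda>k. \<Sum>u\<in>S0. c u * u k)"
      proof
        fix X assume X: "X \<in> Pow K - {K}"
        hence "X \<subset> K" by auto
        hence "card X < card K" using finK by (rule psubset_card_mono[rotated])
        moreover have "X \<subseteq> {0..<n}" using X less.prems by auto
        ultimately show "\<exists>c. w X = (\<lambda>k. \<Sum>u\<in>S0. c u * u k)" using less.hyps by blast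
      qed
      then obtain cc where cc: "\<forall>X\<in>Pow K - {K}. w X = (\<lambda>k. \<Sum>u\<in>S0. cc X u * u k)" by metis
      show ?thesis
      proof (intro exI ext)
        fix k
        have "w K k = (\<Sum>X\<in>Pow K - {K}. a X * (\<Sum>u\<in>S0. cc X u * u k))"
          unfolding wK using cc by (intro sum.cong) auto
        also have "\<dots> = (\<Sum>X\<in>Pow K - {K}. \<Sum>u\<in>S0. a X * cc X u * u k)"
          by (simp add: sum_distrib_left mult.assoc)
        also have "\<dots> = (\<Sum>u\<in>S0. \<Sum>X\<in>Pow K - {K}. a X * cc X u * u k)"
          by (rule sum.swap)
        also have "\<dots> = (\<Sum>u\<in>S0. (\<Sum>X\<in>Pow K - {K}. a X * cc X u) * u k)"
          by (simp add: sum_distrib_right)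
        finally show "w K k = (\<Sum>u\<in>S0. (\<Sum>X\<in>Pow K - {K}. a X * cc X u) * u k)" .
      qed
    qed
  qed
  obtain c where "w {0..<n} = (\<lambda>k. \<Sum>u\<in>S0. c u * u k)" using rep[of "{0..<n}"] by auto
  thus ?thesis unfolding in_lin_span_def full
    using T unfolding Idx_def d_def n_def by metis
qed

end
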